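(* Let $f$ be analytic on $\mathbb{D}$ and suppose there is a constant $c\ge 0$ with $\operatorname{Diam} f(r\mathbb{D})=cr$ for all $0<r<1$. Then $f(z)=a+bz$ for some constants $a,b\in\mathbb{C}$.
   Context: $\mathbb{D}$ is the open unit disk, $r\mathbb{D}=\{|z|<r\}$; for a set $E\subset\mathbb{C}$, $\operatorname{Diam}E=\sup_{z,w\in E}|z-w|$. *)

theory Defs
  imports "HOL-Complex_Analysis.Complex_Analysis" "HOL-Library.Extended_Real"
begin

definition Diam :: "complex set \<Rightarrow> ereal" where
  "Diam E = (SUP z\<in>E. SUP w\<in>E. ereal (cmod (z - w)))"

end

theory Submission
  imports Defs
begin


lemma schw:
  fixes f :: "complex \<Rightarrow> complex" and c :: real
  assumes hol: "f holomorphic_on ball 0 1" and c: "c > 0"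
  and A: "\<forall>z\<in>ball 0 1. \<forall>w\<in>ball 0 1. cmod (f z - f w) \<le> c * max (cmod z) (cmod w)"
  and p: "cmod p \<le> 1" and q: "cmod q \<le> 1"
  shows "cmod (deriv f 0 * (p - q)) \<le> c"
  and "(\<exists>s. cmod s < 1 \<and> s \<noteq> 0 \<and> cmod (f (s*p) - f (s*q)) = c * cmod s) \<or> cmod (deriv f 0 * (p - q)) = c
     \<Longrightarrow> \<forall>s. cmod s < 1 \<longrightarrow> f (s*p) - f (s*q) = deriv f 0 * (p - q) * s"
proof -
  define g where "g = (\<lambda>s. (f (s*p) - f (s*q)) / c)"
  have inb: "s * x \<in> ball 0 1" if "cmod s < 1" "cmod x \<le> 1" for s x
  proof -
    have "cmod (s * x) \<le> cmod s" using that by (simp add: norm_mult mult_left_le)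
    then show ?thesis using that by simp
  qed
  have h1: "(\<lambda>s. f (s*x)) holomorphic_on ball 0 1" if "cmod x \<le> 1" for x
  proof -
    have "(f \<circ> (\<lambda>s. s*x)) holomorphic_on ball 0 1"
      by (rule holomorphic_on_compose_gen[where t="ball 0 1"]) (auto intro!: holomorphic_intros hol inb that)
    then show ?thesis by (simp add: o_def)
  qed
  have holg: "g holomorphic_on ball 0 1"
    unfolding g_def using h1[OF p] h1[OF q] c by (intro holomorphic_intros) auto
  have g0: "g 0 = 0" by (simp add: g_def)
  have gle: "cmod (g s) \<le> cmod s" if "cmod s < 1" for s
  proof -
    have "cmod (f (s*p) - f (s*q)) \<le> c * max (cmod (s*p)) (cmod (s*q))"
      using A inb that p q by blast
    also have "\<dots> \<le> c * cmod s"
      using c p q by (intro mult_left_mono) (auto simp: norm_mult mult_left_le)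
    finally show ?thesis using c by (simp add: g_def norm_divide field_simps)
  qed
  have glt: "cmod (g s) < 1" if "cmod s < 1" for s using gle[OF that] that by linarith
  have df: "(f has_field_derivative deriv f x) (at x)" if "x \<in> ball 0 1" for x
    using holomorphic_derivI[OF hol _ that] by simp
  have dlin: "(f has_field_derivative deriv f 0) (at (0 * x))" for x using df by simp
  have dc: "((\<lambda>s. f (s*x)) has_field_derivative deriv f 0 * x) (at 0)" for x
  proof -
    have dl2: "((\<lambda>s. s*x) has_field_derivative x) (at 0)" by (auto intro!: derivative_eq_intros)
    show ?thesis by (rule DERIV_chain2[where f=f and g="\<lambda>s. s * x" and x=0 and s=UNIV, OF dlin dl2])
  qed
  have "((\<lambda>s. (f (s*p) - f (s*q)) / c) has_field_derivative (deriv f 0 * p - deriv f 0 * q) / c) (at 0)"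
    by (intro DERIV_cdivide DERIV_diff dc)
  then have dg: "(g has_field_derivative deriv f 0 * (p - q) / c) (at 0)"
    unfolding g_def by (simp add: right_diff_distrib)
  then have dg0: "deriv g 0 = deriv f 0 * (p - q) / c" by (rule DERIV_imp_deriv)
  note S = Schwarz_Lemma[OF holg g0 glt, of 0]
  show "cmod (deriv f 0 * (p - q)) \<le> c"
    using S(2) c by (simp add: dg0 norm_divide field_simps)
  assume H: "(\<exists>s. cmod s < 1 \<and> s \<noteq> 0 \<and> cmod (f (s*p) - f (s*q)) = c * cmod s) \<or> cmod (deriv f 0 * (p - q)) = c"
  have Hd: "(\<exists>z. norm z < 1 \<and> z \<noteq> 0 \<and> norm(g z) = norm z) \<or> norm(deriv g 0) = 1"
    using H
  proof
    assume "\<exists>s. cmod s < 1 \<and> s \<noteq> 0 \<and> cmod (f (s*p) - f (s*q)) = c * cmod s"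
    then obtain s where s: "cmod s < 1" "s \<noteq> 0" "cmod (f (s*p) - f (s*q)) = c * cmod s" by blast
    then have "norm (g s) = norm s" using c by (simp add: g_def norm_divide)
    then show ?thesis using s by blast
  next
    assume "cmod (deriv f 0 * (p - q)) = c"
    then have "norm (deriv g 0) = 1" using c by (simp add: dg0 norm_divide)
    then show ?thesis by blast
  qed
  have "\<exists>\<alpha>. (\<forall>z. cmod z < 1 \<longrightarrow> g z = \<alpha> * z) \<and> cmod \<alpha> = 1"
    by (rule S(3)) (auto simp: Hd)
  then obtain \<alpha> where al: "\<And>z. norm z < 1 \<Longrightarrow> g z = \<alpha> * z" by blast
  have "((\<lambda>z. \<alpha> * z) has_field_derivative \<alpha>) (at 0)" by (auto intro!: derivative_eq_intros)
  then have "(g has_field_derivative \<alpha>) (at 0)"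
    by (rule has_field_derivative_transform_within_open[where S="ball 0 1"]) (auto simp: al)
  then have "\<alpha> = deriv f 0 * (p - q) / c" using DERIV_unique dg by blast
  then have aeq: "of_real c * \<alpha> = deriv f 0 * (p - q)" using c by (simp add: field_simps)
  show "\<forall>s. cmod s < 1 \<longrightarrow> f (s*p) - f (s*q) = deriv f 0 * (p - q) * s"
  proof (intro allI impI)
    fix s :: complex assume s: "cmod s < 1"
    have "f (s*p) - f (s*q) = of_real c * g s" using c by (simp add: g_def)
    also have "\<dots> = (of_real c * \<alpha>) * s" using al[OF s] by simp
    also have "\<dots> = deriv f 0 * (p - q) * s" using aeq by simp
    finally show "f (s*p) - f (s*q) = deriv f 0 * (p - q) * s" .
  qed
qed


lemma Diam_ge: "x \<in> E \<Longrightarrow> y \<in> E \<Longrightarrow> ereal (cmod (x - y)) \<le> Diam E"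
  unfolding Diam_def by (meson SUP_upper order_trans)

lemma boundA:
  fixes f :: "complex \<Rightarrow> complex" and c :: real
  assumes D: "\<And>r. 0 < r \<Longrightarrow> r < 1 \<Longrightarrow> Diam (f ` ball 0 r) = ereal (c * r)"
    and z: "z \<in> ball 0 1" and w: "w \<in> ball 0 1"
  shows "cmod (f z - f w) \<le> c * max (cmod z) (cmod w)"
proof -
  define m where "m = max (cmod z) (cmod w)"
  have m1: "m < 1" "0 \<le> m" using z w by (auto simp: m_def le_max_iff_disj)
  have le: "cmod (f z - f w) \<le> c * r" if "m < r" "r < 1" for r
  proof -
    have "z \<in> ball 0 r" "w \<in> ball 0 r" using that by (auto simp: m_def)
    then have "ereal (cmod (f z - f w)) \<le> Diam (f ` ball 0 r)" by (intro Diam_ge imageI)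
    also have "\<dots> = ereal (c * r)" using D that m1 by auto
    finally show ?thesis by simp
  qed
  have "((\<lambda>r. c * r) \<longlongrightarrow> c * m) (at_right m)" by (intro tendsto_intros)
  moreover have "eventually (\<lambda>r. cmod (f z - f w) \<le> c * r) (at_right m)"
    unfolding eventually_at_right_field using m1 le by (intro exI[of _ 1]) auto
  ultimately have "cmod (f z - f w) \<le> c * m"
    by (rule tendsto_lowerbound) simp
  then show ?thesis by (simp add: m_def)
qed


lemma realconst:
  fixes h :: "complex \<Rightarrow> complex"
  assumes hol: "h holomorphic_on ball 0 1" and im: "\<And>w. w \<in> ball 0 1 \<Longrightarrow> Im (h w) = 0"
  shows "h constant_on ball 0 1"
proof (rule ccontr)
  assume nc: "\<not> h constant_on ball 0 1"
  have "open (h ` ball 0 1)"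
    by (rule open_mapping_thm[OF hol]) (auto simp: nc)
  moreover have "h 0 \<in> h ` ball 0 1" by simp
  ultimately obtain e where e: "e > 0" "ball (h 0) e \<subseteq> h ` ball 0 1"
    unfolding open_contains_ball by blast
  have "dist (h 0) (h 0 + \<i> * of_real (e/2)) = e/2" using e by (simp add: dist_norm norm_mult)
  then have "h 0 + \<i> * of_real (e/2) \<in> ball (h 0) e" unfolding mem_ball using e by linarith
  from subsetD[OF e(2) this] obtain w where "w \<in> ball 0 1" "h 0 + \<i> * of_real (e/2) = h w"
    by (rule imageE)
  then have "h w = h 0 + \<i> * of_real (e/2)" "w \<in> ball 0 1" by simp_all
  then have "Im (h w) = Im (h 0) + e/2" by simp
  moreover have "Im (h w) = 0" using im \<open>w \<in> ball 0 1\<close> by blast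
  moreover have "Im (h 0) = 0" using im[of 0] by simp
  ultimately show False using e by linarith
qed



theorem corollary4:
  fixes f :: "complex \<Rightarrow> complex" and c :: real
  assumes "f holomorphic_on ball 0 1"
    and "c \<ge> 0"
    and "\<And>r. 0 < r \<Longrightarrow> r < 1 \<Longrightarrow> Diam (f ` ball 0 r) = ereal (c * r)"
  shows "\<exists>a b. \<forall>z\<in>ball 0 1. f z = a + b * z"
proof -
  note hol = assms(1)
  define a1 where "a1 = deriv f 0"
  have A: "\<And>z w. z \<in> ball 0 1 \<Longrightarrow> w \<in> ball 0 1 \<Longrightarrow> cmod (f z - f w) \<le> c * max (cmod z) (cmod w)"
    using boundA[OF assms(3)] by blast
  show ?thesis
  proof (cases "c = 0")
    case True
    have "\<forall>z\<in>ball 0 1. f z = f 0 + 0 * z"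
    proof
      fix z :: complex assume "z \<in> ball 0 1"
      then have "cmod (f z - f 0) \<le> 0" using A[of z 0] True by simp
      then show "f z = f 0 + 0 * z" by simp
    qed
    then show ?thesis by blast
  next
    case False
    then have c: "c > 0" using assms(2) by simp
    have A': "\<forall>z\<in>ball 0 1. \<forall>w\<in>ball 0 1. cmod (f z - f w) \<le> c * max (cmod z) (cmod w)"
      using A by blast
    note S1 = schw(1)[OF hol c A'] and S2 = schw(2)[OF hol c A']
    have lb: "2 * cmod a1 \<le> c" using S1[of 1 "-1"] by (simp add: a1_def norm_mult)
    define B where "B = cball (0::complex) (1/2)"
    have Bsub: "B \<subseteq> ball 0 1" by (auto simp: B_def)
    have contf: "continuous_on B f"
      using holomorphic_on_imp_continuous_on[OF hol] Bsub continuous_on_subset by blast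
    have c1: "continuous_on (B \<times> B) (\<lambda>x. f (fst x))"
      by (rule continuous_on_compose2[OF contf]) (auto intro!: continuous_intros)
    have c2: "continuous_on (B \<times> B) (\<lambda>x. f (snd x))"
      by (rule continuous_on_compose2[OF contf]) (auto intro!: continuous_intros)
    have "continuous_on (B \<times> B) (\<lambda>x. cmod (f (fst x) - f (snd x)))"
      by (intro continuous_intros c1 c2)
    moreover have "compact (B \<times> B)" by (simp add: B_def compact_Times)
    moreover have "B \<times> B \<noteq> {}" by (auto simp: B_def)
    ultimately obtain x0 where x0: "x0 \<in> B \<times> B"
      "\<And>y. y \<in> B \<times> B \<Longrightarrow> cmod (f (fst y) - f (snd y)) \<le> cmod (f (fst x0) - f (snd x0))"
      using continuous_attains_sup[of "B \<times> B" "\<lambda>x. cmod (f (fst x) - f (snd x))"] by blast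
    obtain z0 w0 where zw: "x0 = (z0, w0)" by (cases x0)
    define M where "M = cmod (f z0 - f w0)"
    have z0B: "z0 \<in> B" "w0 \<in> B" using x0(1) zw by auto
    have Mmax: "cmod (f z - f w) \<le> M" if "z \<in> B" "w \<in> B" for z w
      using x0(2)[of "(z, w)"] that zw by (simp add: M_def)
    have "Diam (f ` ball 0 (1/2)) \<le> ereal M"
      unfolding Diam_def
    proof (intro SUP_least)
      fix u v assume "u \<in> f ` ball 0 (1/2)" "v \<in> f ` ball 0 (1/2)"
      then obtain z w where "z \<in> ball 0 (1/2)" "w \<in> ball 0 (1/2)" "u = f z" "v = f w" by blast
      moreover then have "z \<in> B" "w \<in> B" by (auto simp: B_def)
      ultimately show "ereal (cmod (v - u)) \<le> ereal M" using Mmax by simp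
    qed
    then have "c / 2 \<le> M" using assms(3)[of "1/2"] by simp
    moreover have "M \<le> c / 2"
    proof -
      have "M \<le> c * max (cmod z0) (cmod w0)" unfolding M_def using A z0B Bsub by blast
      also have "\<dots> \<le> c * (1/2)" using z0B c by (intro mult_left_mono) (auto simp: B_def)
      finally show ?thesis by simp
    qed
    ultimately have Meq: "M = c / 2" by simp
    have n2: "cmod (2 * z0) \<le> 1" "cmod (2 * w0) \<le> 1" using z0B by (auto simp: B_def norm_mult)
    have hyp: "\<exists>s. cmod s < 1 \<and> s \<noteq> 0 \<and> cmod (f (s * (2*z0)) - f (s * (2*w0))) = c * cmod s"
      by (rule exI[of _ "1/2"]) (simp add: Meq[unfolded M_def])
    have "\<forall>s. cmod s < 1 \<longrightarrow> f (s * (2*z0)) - f (s * (2*w0)) = deriv f 0 * (2*z0 - 2*w0) * s"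
      using S2[OF n2] hyp by blast
    from this[rule_format, of "1/2"] have "f z0 - f w0 = a1 * (z0 - w0)"
      by (simp add: a1_def algebra_simps)
    then have "c / 2 = cmod a1 * cmod (z0 - w0)" using Meq by (simp add: M_def norm_mult)
    also have "\<dots> \<le> cmod a1 * (cmod z0 + cmod w0)"
      by (intro mult_left_mono norm_triangle_ineq4) simp
    also have "\<dots> \<le> cmod a1 * 1"
      using z0B by (intro mult_left_mono) (auto simp: B_def)
    finally have ceq: "c = 2 * cmod a1" using lb by simp
    have odd: "f z - f (-z) = 2 * a1 * z" if z: "z \<in> ball 0 1" for z
    proof (cases "z = 0")
      case True then show ?thesis by simp
    next
      case False
      define u where "u = z / of_real (cmod z)"
      have u1: "cmod u = 1" using False by (simp add: u_def norm_divide)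
      have "cmod (deriv f 0 * (u - - u)) = c"
        using u1 ceq by (simp add: a1_def norm_mult)
      then have "\<forall>s. cmod s < 1 \<longrightarrow> f (s*u) - f (s*(-u)) = deriv f 0 * (u - - u) * s"
        using S2[of u "-u"] u1 by simp
      from this[rule_format, of "of_real (cmod z)"] z False
      show ?thesis by (simp add: u_def a1_def algebra_simps)
    qed
    have im: "Im (cnj a1 * deriv f (-p)) = 0" if p: "p \<in> ball 0 1" "p \<noteq> 0" for p
    proof -
      define A0 where "A0 = f p - f (-p)"
      have A0: "A0 = 2 * a1 * p" using odd p by (simp add: A0_def)
      have mp: "-p \<in> ball 0 1" using p by simp
      have dfp: "(f has_field_derivative deriv f (-p * exp (\<i> * 0))) (at (-p * exp (\<i> * 0)))"
        using holomorphic_derivI[OF hol open_ball, of "-p"] mp by simp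
      have dinner: "((\<lambda>t. -p * exp (\<i> * t)) has_field_derivative (-p * \<i>)) (at 0)"
        by (auto intro!: derivative_eq_intros)
      have "((\<lambda>t. f (-p * exp (\<i> * t))) has_field_derivative deriv f (-p * exp (\<i> * 0)) * (-p * \<i>)) (at 0)"
        by (rule DERIV_chain2[where f=f and g="\<lambda>t. -p * exp (\<i> * t)" and x=0 and s=UNIV, OF dfp dinner])
      then have "((\<lambda>t. f (-p * exp (\<i> * t))) has_field_derivative deriv f (-p) * (-p * \<i>)) (at 0)"
        by simp
      then have "((\<lambda>t. f p - f (-p * exp (\<i> * t))) has_field_derivative
                 0 - deriv f (-p) * (-p * \<i>)) (at 0)"
        by (rule DERIV_diff[OF DERIV_const])
      then have "((\<lambda>t. cnj A0 * (f p - f (-p * exp (\<i> * t)))) has_field_derivative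
                 cnj A0 * (0 - deriv f (-p) * (-p * \<i>))) (at 0)"
        by (rule DERIV_cmult)
      then have dP: "((\<lambda>t. cnj A0 * (f p - f (-p * exp (\<i> * t)))) has_field_derivative
                 cnj A0 * (0 - deriv f (-p) * (-p * \<i>))) (at (of_real 0))"
        by simp
      define D where "D = cnj A0 * (0 - deriv f (-p) * (-p * \<i>))"
      have "((\<lambda>x::real. cnj A0 * (f p - f (-p * exp (\<i> * of_real x)))) has_vector_derivative D) (at 0)"
        using has_vector_derivative_real_field[OF dP[folded D_def]] by simp
      then have dR: "((\<lambda>x::real. Re (cnj A0 * (f p - f (-p * exp (\<i> * of_real x))))) has_field_derivative Re D) (at 0)"
        by (rule has_field_derivative_Re)
      have le: "\<forall>y. \<bar>0 - y\<bar> < 1 \<longrightarrow> Re (cnj A0 * (f p - f (-p * exp (\<i> * of_real y))))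
                    \<le> Re (cnj A0 * (f p - f (-p * exp (\<i> * of_real 0))))"
      proof (intro allI impI)
        fix y :: real
        have ny: "cmod (-p * exp (\<i> * of_real y)) = cmod p" by (simp add: norm_mult)
        then have "cmod (f p - f (-p * exp (\<i> * of_real y))) \<le> c * cmod p"
          using A[of p "-p * exp (\<i> * of_real y)"] p by simp
        then have "Re (cnj A0 * (f p - f (-p * exp (\<i> * of_real y)))) \<le> cmod A0 * (c * cmod p)"
          by (metis complex_Re_le_cmod complex_mod_cnj mult_left_mono norm_ge_zero norm_mult order_trans)
        also have "\<dots> = cmod A0 ^ 2"
          using ceq A0 by (simp add: norm_mult power2_eq_square)
        also have "\<dots> = Re (cnj A0 * A0)"
          unfolding cmod_power2 by (simp add: power2_eq_square)
        finally show "Re (cnj A0 * (f p - f (-p * exp (\<i> * of_real y))))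
                    \<le> Re (cnj A0 * (f p - f (-p * exp (\<i> * of_real 0))))"
          by (simp add: A0_def)
      qed
      have "Re D = 0" by (rule DERIV_local_max[OF dR _ le]) simp
      moreover have "Re D = - 2 * (Re p ^ 2 + Im p ^ 2) * Im (cnj a1 * deriv f (-p))"
        by (simp add: D_def A0 algebra_simps power2_eq_square)
      moreover have "Re p ^ 2 + Im p ^ 2 > 0"
        using p(2) by (simp add: cmod_power2[symmetric])
      ultimately show ?thesis by simp
    qed
    have imall: "Im (cnj a1 * deriv f w) = 0" if "w \<in> ball 0 1" for w
    proof (cases "w = 0")
      case True then show ?thesis by (simp add: a1_def)
    next
      case False then show ?thesis using im[of "-w"] that by simp
    qed
    have hh: "(\<lambda>w. cnj a1 * deriv f w) holomorphic_on ball 0 1"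
      by (intro holomorphic_intros holomorphic_deriv hol) auto
    obtain k where k: "\<And>w. w \<in> ball 0 1 \<Longrightarrow> cnj a1 * deriv f w = k"
      using realconst[OF hh imall] unfolding constant_on_def by blast
    have a1nz: "a1 \<noteq> 0" using ceq c by auto
    define b where "b = k / cnj a1"
    have db: "deriv f w = b" if "w \<in> ball 0 1" for w
      using k[OF that] a1nz by (simp add: b_def field_simps)
    have "\<exists>a. \<forall>x\<in>ball 0 1. f x - b * x = a"
    proof (rule has_field_derivative_zero_constant)
      show "convex (ball (0::complex) 1)" by simp
      fix x :: complex assume x: "x \<in> ball 0 1"
      have "(f has_field_derivative b) (at x within ball 0 1)"
        using holomorphic_derivI[OF hol open_ball x] db[OF x] by simp
      then show "((\<lambda>x. f x - b * x) has_field_derivative 0) (at x within ball 0 1)"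
        by (auto intro!: derivative_eq_intros)
    qed
    then obtain a where "\<And>x. x \<in> ball 0 1 \<Longrightarrow> f x - b * x = a" by blast
    then have "\<forall>z\<in>ball 0 1. f z = a + b * z" by (metis add_diff_cancel_left' diff_add_cancel add.commute)
    then show ?thesis by blast
  qed
qed

end
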